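(* Let $n,m,N$ be positive integers, $p_1,\ldots,p_N,q_1,\ldots,q_N,g_1,\ldots,g_m\in\mathbb{R}[\mathbf{x}]$ with $\mathbf{x}=(x_1,\ldots,x_n)$, $\mathbf{K}=\{\mathbf{x}\in\mathbb{R}^n\mid g_j(\mathbf{x})\ge0,\ j\in[m]\}$, and assume $\mathbf{K}$ is compact and $q_i>0$ on $\mathbf{K}$ for all $i\in[N]$. Let $\rho=\inf_{\mathbf{x}\in\mathbf{K}}\sum_{i=1}^Np_i(\mathbf{x})/q_i(\mathbf{x})$. With $\mathcal{A}_i$ as in the context, let \[ \rho^{\mathrm{s}}=\sup\Big\{c\ \Big|\ c\in\mathbb{R},\ h_i\in\mathbb{R}[\overline{\mathcal{A}_i}]\ (i=2,\ldots,N),\ \frac{p_1(\mathbf{x})}{q_1(\mathbf{x})}+\sum_{i=2}^Nh_i(\mathbf{x})\ge c\ \text{and}\ \frac{p_i(\mathbf{x})}{q_i(\mathbf{x})}\ge h_i(\mathbf{x})\ (i=2,\ldots,N)\ \text{for all }\mathbf{x}\in\mathbf{K}\Big\}. \] Then $\rho^{\mathrm{s}}=\rho$.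
   Context: $\operatorname{supp}(f)$ is the set of exponents of monomials with nonzero coefficient in $f$. For $i\in\{2,\ldots,N\}$, $\mathcal{A}_i=\operatorname{supp}(p_i)\cup\operatorname{supp}(q_i)\cup\bigcup_{j=1}^m\operatorname{supp}(g_j)$. For finite $\mathcal{A}\subseteq\mathbb{N}^n$, $\mathcal{R}(\mathcal{A})=\{\mathbf{r}\in\{0,1\}^n\mid \mathbf{r}^\intercal\boldsymbol{\alpha}\equiv0\ (\mathrm{mod}\ 2)\ \forall\boldsymbol{\alpha}\in\mathcal{A}\}$ and $\overline{\mathcal{A}}=\{\boldsymbol{\alpha}\in\mathbb{N}^n\mid\mathbf{r}^\intercal\boldsymbol{\alpha}\equiv0\ (\mathrm{mod}\ 2)\ \forall\mathbf{r}\in\mathcal{R}(\mathcal{A})\}$. $\mathbb{R}[\overline{\mathcal{A}}]$ is the set of polynomials whose support is contained in $\overline{\mathcal{A}}$. *)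

theory Defs
  imports "HOL-Analysis.Analysis" "HOL-Library.Poly_Mapping" "HOL-Library.Extended_Real"
begin

text \<open>Real polynomials in the variables x_i, i :: 'n (a finite type, so n = CARD('n)).\<close>
type_synonym 'n rpoly = "('n \<Rightarrow> nat) \<Rightarrow>\<^sub>0 real"

definition peval :: "('n::finite) rpoly \<Rightarrow> real ^ 'n \<Rightarrow> real" where
  "peval f x = (\<Sum>\<alpha>\<in>Poly_Mapping.keys f. Poly_Mapping.lookup f \<alpha> * (\<Prod>i\<in>UNIV. (x $ i) ^ \<alpha> i))"

definition supp :: "('n::finite) rpoly \<Rightarrow> ('n \<Rightarrow> nat) set" where
  "supp f = Poly_Mapping.keys f"

definition Rset :: "('n::finite \<Rightarrow> nat) set \<Rightarrow> ('n \<Rightarrow> nat) set" where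
  "Rset A = {r. (\<forall>i. r i \<in> {0,1}) \<and> (\<forall>\<alpha>\<in>A. even (\<Sum>i\<in>UNIV. r i * \<alpha> i))}"

definition Abar :: "('n::finite \<Rightarrow> nat) set \<Rightarrow> ('n \<Rightarrow> nat) set" where
  "Abar A = {\<alpha>. \<forall>r\<in>Rset A. even (\<Sum>i\<in>UNIV. r i * \<alpha> i)}"

end

theory Submission
  imports Defs
begin

definition mnm :: "('n::finite \<Rightarrow> nat) \<Rightarrow> real^'n \<Rightarrow> real" where
  "mnm \<alpha> x = (\<Prod>i\<in>UNIV. (x$i) ^ \<alpha> i)"

lemma peval_mnm: "peval f x = (\<Sum>\<alpha>\<in>Poly_Mapping.keys f. Poly_Mapping.lookup f \<alpha> * mnm \<alpha> x)"
  by (simp add: peval_def mnm_def)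

lemma rep_exists:
  fixes S :: "('n::finite \<Rightarrow> nat) set"
  assumes "finite S"
  shows "\<exists>f::'n rpoly. Poly_Mapping.keys f \<subseteq> S \<and> (\<forall>x. peval f x = (\<Sum>\<alpha>\<in>S. c \<alpha> * mnm \<alpha> x))"
proof -
  define f :: "'n rpoly" where "f = Abs_poly_mapping (\<lambda>\<alpha>. if \<alpha>\<in>S then c \<alpha> else 0)"
  have fin: "finite {\<alpha>. (if \<alpha>\<in>S then c \<alpha> else 0) \<noteq> 0}"
    using assms by (rule finite_subset[rotated]) auto
  have lk: "Poly_Mapping.lookup f = (\<lambda>\<alpha>. if \<alpha>\<in>S then c \<alpha> else 0)"
    unfolding f_def using fin by simp
  have ks: "Poly_Mapping.keys f = {\<alpha>\<in>S. c \<alpha> \<noteq> 0}" using lk by (auto simp: in_keys_iff split: if_splits)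
  have "peval f x = (\<Sum>\<alpha>\<in>S. c \<alpha> * mnm \<alpha> x)" for x
  proof -
    have "peval f x = (\<Sum>\<alpha>\<in>{\<alpha>\<in>S. c \<alpha> \<noteq> 0}. c \<alpha> * mnm \<alpha> x)"
      unfolding peval_mnm ks by (rule sum.cong) (auto simp: lk)
    also have "\<dots> = (\<Sum>\<alpha>\<in>S. c \<alpha> * mnm \<alpha> x)"
      by (rule sum.mono_neutral_left) (auto simp: assms)
    finally show ?thesis .
  qed
  then show ?thesis using ks by auto
qed

lemma rep_sum_gen:
  fixes e :: "'i \<Rightarrow> ('n::finite \<Rightarrow> nat)"
  assumes "finite I"
  shows "\<exists>f::'n rpoly. \<forall>x. peval f x = (\<Sum>i\<in>I. c i * mnm (e i) x)"
proof -
  obtain f :: "'n rpoly" where f: "\<forall>x. peval f x = (\<Sum>\<alpha>\<in>e`I. (\<Sum>i\<in>{i\<in>I. e i = \<alpha>}. c i) * mnm \<alpha> x)"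
    using rep_exists[of "e`I" "\<lambda>\<alpha>. \<Sum>i\<in>{i\<in>I. e i = \<alpha>}. c i"] assms by auto
  have "(\<Sum>\<alpha>\<in>e`I. (\<Sum>i\<in>{i\<in>I. e i = \<alpha>}. c i) * mnm \<alpha> x) = (\<Sum>i\<in>I. c i * mnm (e i) x)" for x
  proof -
    have "(\<Sum>i\<in>I. c i * mnm (e i) x) = (\<Sum>\<alpha>\<in>e`I. \<Sum>i\<in>{i\<in>I. e i = \<alpha>}. c i * mnm (e i) x)"
      using sum.image_gen[OF assms, of "\<lambda>i. c i * mnm (e i) x" e] .
    also have "\<dots> = (\<Sum>\<alpha>\<in>e`I. (\<Sum>i\<in>{i\<in>I. e i = \<alpha>}. c i) * mnm \<alpha> x)"
      by (rule sum.cong[OF refl]) (simp add: sum_distrib_right)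
    finally show ?thesis by simp
  qed
  then show ?thesis using f by auto
qed

definition rep :: "(real^'n::finite \<Rightarrow> real) \<Rightarrow> bool" where
  "rep F \<longleftrightarrow> (\<exists>f::'n rpoly. \<forall>x. peval f x = F x)"

lemma rep_const: "rep (\<lambda>x::real^'n::finite. c)"
proof -
  obtain f :: "'n rpoly" where "\<forall>x. peval f x = (\<Sum>i\<in>{()}. c * mnm (\<lambda>_. 0) x)"
    using rep_sum_gen[of "{()}" "\<lambda>_. c" "\<lambda>_. (\<lambda>_. 0)"] by auto
  then show ?thesis unfolding rep_def by (auto simp: mnm_def)
qed

lemma rep_add: assumes "rep F" "rep G" shows "rep (\<lambda>x. F x + G x)"
proof -
  obtain f g where f: "\<forall>x. peval f x = F x" and g: "\<forall>x. peval g x = G x" using assms unfolding rep_def by auto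
  obtain h where h: "\<forall>x. peval h x = (\<Sum>i\<in>Poly_Mapping.keys f <+> Poly_Mapping.keys g.
      (case_sum (Poly_Mapping.lookup f) (Poly_Mapping.lookup g) i) * mnm (case_sum id id i) x)"
    using rep_sum_gen[OF finite_Plus[OF finite_keys finite_keys], of "case_sum (Poly_Mapping.lookup f) (Poly_Mapping.lookup g)" "case_sum id id"] by blast
  have "peval h x = F x + G x" for x
  proof -
    have "peval h x = (\<Sum>\<alpha>\<in>Poly_Mapping.keys f. Poly_Mapping.lookup f \<alpha> * mnm \<alpha> x) + (\<Sum>\<alpha>\<in>Poly_Mapping.keys g. Poly_Mapping.lookup g \<alpha> * mnm \<alpha> x)"
      using h by (simp add: sum.Plus o_def)
    also have "\<dots> = F x + G x" using f g unfolding peval_mnm by simp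
    finally show ?thesis .
  qed
  then show ?thesis unfolding rep_def by blast
qed

lemma mnm_add: "mnm (\<lambda>k. a k + b k) x = mnm a x * mnm b x"
  by (simp add: mnm_def power_add prod.distrib)

lemma rep_mult: assumes "rep F" "rep G" shows "rep (\<lambda>x. F x * G x)"
proof -
  obtain f g where f: "\<forall>x. peval f x = F x" and g: "\<forall>x. peval g x = G x" using assms unfolding rep_def by auto
  obtain h where h: "\<forall>x. peval h x = (\<Sum>i\<in>Poly_Mapping.keys f \<times> Poly_Mapping.keys g.
      (Poly_Mapping.lookup f (fst i) * Poly_Mapping.lookup g (snd i)) * mnm (\<lambda>k. fst i k + snd i k) x)"
    using rep_sum_gen[OF finite_cartesian_product[OF finite_keys finite_keys], of "\<lambda>i. Poly_Mapping.lookup f (fst i) * Poly_Mapping.lookup g (snd i)" "\<lambda>i k. fst i k + snd i k"] by blast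
  have "peval h x = F x * G x" for x
  proof -
    have "F x * G x = (\<Sum>a\<in>Poly_Mapping.keys f. \<Sum>b\<in>Poly_Mapping.keys g.
       (Poly_Mapping.lookup f a * mnm a x) * (Poly_Mapping.lookup g b * mnm b x))"
      unfolding f[rule_format, symmetric] g[rule_format, symmetric] peval_mnm sum_product ..
    also have "\<dots> = (\<Sum>i\<in>Poly_Mapping.keys f \<times> Poly_Mapping.keys g.
      (Poly_Mapping.lookup f (fst i) * Poly_Mapping.lookup g (snd i)) * mnm (\<lambda>k. fst i k + snd i k) x)"
      by (simp add: sum.cartesian_product mnm_add mult_ac split_def)
    finally show ?thesis using h by simp
  qed
  then show ?thesis unfolding rep_def by blast
qed

lemma rep_linear: fixes F :: "real^'n::finite \<Rightarrow> real" assumes "bounded_linear F" shows "rep F"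
proof -
  obtain h :: "'n rpoly" where h: "\<forall>x. peval h x = (\<Sum>k\<in>UNIV. F (axis k 1) * mnm (\<lambda>j. if j = k then 1 else 0) x)"
    using rep_sum_gen[OF finite_class.finite_UNIV, of "\<lambda>k. F (axis k 1)" "\<lambda>k j. if j = k then 1 else 0"] by blast
  have m: "mnm (\<lambda>j. if j = k then 1 else 0) x = x$k" for k and x :: "real^'n"
  proof -
    have "(\<lambda>j. (x$j)^(if j=k then 1 else 0)) = (\<lambda>j. if j = k then x$j else 1)" by auto
    then show ?thesis unfolding mnm_def by (simp only:) (simp add: prod.delta)
  qed
  have "(\<Sum>k\<in>UNIV. F (axis k 1) * x$k) = F x" for x
  proof -
    have "F x = F (\<Sum>k\<in>UNIV. (x$k) *\<^sub>R axis k 1)"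
      using basis_expansion[of x] by (simp add: scalar_mult_eq_scaleR)
    also have "\<dots> = (\<Sum>k\<in>UNIV. F ((x$k) *\<^sub>R axis k 1))"
      by (rule linear_sum[OF bounded_linear.linear[OF assms]])
    also have "\<dots> = (\<Sum>k\<in>UNIV. x$k * F (axis k 1))"
      by (rule sum.cong[OF refl], subst linear_scale[OF bounded_linear.linear[OF assms]], simp only: real_scaleR_def)
    finally show ?thesis by (simp add: mult.commute)
  qed
  then have "\<forall>x. peval h x = F x" using h m by simp
  then show ?thesis unfolding rep_def by blast
qed

lemma rep_poly: "real_polynomial_function F \<Longrightarrow> rep (F :: real^'n::finite \<Rightarrow> real)"
  by (induction rule: real_polynomial_function.induct)
     (auto intro: rep_linear rep_const rep_add rep_mult)

definition flip :: "('n::finite \<Rightarrow> nat) \<Rightarrow> real^'n \<Rightarrow> real^'n" where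
  "flip r x = (\<chi> k. (-1)^(r k) * x$k)"

lemma mnm_flip: "mnm \<alpha> (flip r x) = (-1)^(\<Sum>i\<in>UNIV. r i * \<alpha> i) * mnm \<alpha> x"
  by (simp add: mnm_def flip_def power_mult_distrib prod.distrib power_sum power_mult)

lemma peval_flip: "peval f (flip r x) =
  (\<Sum>\<alpha>\<in>Poly_Mapping.keys f. Poly_Mapping.lookup f \<alpha> * (-1)^(\<Sum>i\<in>UNIV. r i * \<alpha> i) * mnm \<alpha> x)"
  by (simp add: peval_mnm mnm_flip mult.assoc)

lemma peval_flip_inv:
  assumes "r \<in> Rset B" "supp f \<subseteq> B"
  shows "peval f (flip r x) = peval f x"
proof -
  have ev: "(-1::real)^(\<Sum>i\<in>UNIV. r i * \<alpha> i) = 1" if "\<alpha> \<in> Poly_Mapping.keys f" for \<alpha>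
    using assms that unfolding Rset_def supp_def by (auto simp: minus_one_power_iff)
  have "peval f (flip r x) =
  (\<Sum>\<alpha>\<in>Poly_Mapping.keys f. Poly_Mapping.lookup f \<alpha> * (-1)^(\<Sum>i\<in>UNIV. r i * \<alpha> i) * mnm \<alpha> x)"
    by (rule peval_flip)
  also have "\<dots> = peval f x" unfolding peval_mnm by (intro sum.cong) (auto simp: ev)
  finally show ?thesis .
qed

lemma finite_Rset: "finite (Rset (B :: ('n::finite \<Rightarrow> nat) set))"
proof -
  have "Rset B \<subseteq> {r. \<forall>i. r i \<in> {0,1::nat}}" unfolding Rset_def by blast
  also have "\<dots> = PiE UNIV (\<lambda>_. {0,1::nat})" by (simp add: PiE_UNIV_domain Pi_def)
  moreover have "finite (PiE (UNIV::'n set) (\<lambda>_. {0,1::nat}))" by (rule finite_PiE) auto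
  ultimately show ?thesis by (metis finite_subset)
qed

lemma zero_Rset: "(\<lambda>_. 0) \<in> Rset B"
  unfolding Rset_def by auto

lemma neg1_pow_mod2: "n mod 2 = m mod 2 \<Longrightarrow> (-1::real)^n = (-1)^m"
  by (auto simp: minus_one_power_iff even_iff_mod_2_eq_zero)

lemma char_sum:
  assumes "\<alpha> \<notin> Abar B"
  shows "(\<Sum>r\<in>Rset B. (-1::real)^(\<Sum>i\<in>UNIV. r i * \<alpha> i)) = 0"
proof -
  obtain r0 where r0: "r0 \<in> Rset B" "odd (\<Sum>i\<in>UNIV. r0 i * \<alpha> i)"
    using assms unfolding Abar_def by auto
  define xr where "xr r = (\<lambda>i. (r i + r0 i) mod 2)" for r :: "'a \<Rightarrow> nat"
  have par: "(\<Sum>i\<in>UNIV. xr r i * \<beta> i) mod 2 = ((\<Sum>i\<in>UNIV. r i * \<beta> i) + (\<Sum>i\<in>UNIV. r0 i * \<beta> i)) mod 2" for r \<beta>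
  proof -
    have "(\<Sum>i\<in>UNIV. xr r i * \<beta> i) mod 2 = (\<Sum>i\<in>UNIV. (xr r i * \<beta> i) mod 2) mod 2"
      by (simp add: mod_sum_eq)
    also have "\<dots> = (\<Sum>i\<in>UNIV. ((r i + r0 i) * \<beta> i) mod 2) mod 2"
      unfolding xr_def by (simp add: mod_mult_left_eq)
    also have "\<dots> = (\<Sum>i\<in>UNIV. (r i + r0 i) * \<beta> i) mod 2"
      by (simp add: mod_sum_eq)
    also have "\<dots> = ((\<Sum>i\<in>UNIV. r i * \<beta> i) + (\<Sum>i\<in>UNIV. r0 i * \<beta> i)) mod 2"
      by (simp add: sum.distrib algebra_simps)
    finally show ?thesis .
  qed
  have mem: "xr r \<in> Rset B" if "r \<in> Rset B" for r
  proof -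
    have "\<forall>i. xr r i \<in> {0,1}" unfolding xr_def by auto
    moreover have "even (\<Sum>i\<in>UNIV. xr r i * \<beta> i)" if "\<beta> \<in> B" for \<beta>
    proof -
      have "even (\<Sum>i\<in>UNIV. r i * \<beta> i)" "even (\<Sum>i\<in>UNIV. r0 i * \<beta> i)"
        using \<open>r \<in> Rset B\<close> r0(1) that unfolding Rset_def by auto
      then have "even ((\<Sum>i\<in>UNIV. r i * \<beta> i) + (\<Sum>i\<in>UNIV. r0 i * \<beta> i))" by simp
      then show ?thesis using par[of r \<beta>] by (metis even_iff_mod_2_eq_zero)
    qed
    ultimately show ?thesis unfolding Rset_def by auto
  qed
  have inv: "xr (xr r) = r" if "r \<in> Rset B" for r
  proof
    fix i
    have "r i \<in> {0,1}" "r0 i \<in> {0,1}" using that r0(1) unfolding Rset_def by auto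
    then show "xr (xr r) i = r i" unfolding xr_def by auto
  qed
  have neg: "(-1::real)^(\<Sum>i\<in>UNIV. xr r i * \<alpha> i) = - ((-1)^(\<Sum>i\<in>UNIV. r i * \<alpha> i))" for r
  proof -
    have "(-1::real)^(\<Sum>i\<in>UNIV. xr r i * \<alpha> i) = (-1)^((\<Sum>i\<in>UNIV. r i * \<alpha> i) + (\<Sum>i\<in>UNIV. r0 i * \<alpha> i))"
      by (rule neg1_pow_mod2) (simp add: par)
    also have "\<dots> = - ((-1)^(\<Sum>i\<in>UNIV. r i * \<alpha> i))"
      using r0(2) by (simp add: power_add)
    finally show ?thesis .
  qed
  have "(\<Sum>r\<in>Rset B. (-1::real)^(\<Sum>i\<in>UNIV. xr r i * \<alpha> i)) = (\<Sum>r\<in>Rset B. (-1::real)^(\<Sum>i\<in>UNIV. r i * \<alpha> i))"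
    by (rule sum.reindex_bij_witness[of _ xr xr]) (auto simp: inv mem)
  then show ?thesis unfolding neg by (simp add: sum_negf)
qed

lemma avg:
  "(\<Sum>r\<in>Rset B. peval f (flip r x)) = real (card (Rset B)) *
     (\<Sum>\<alpha>\<in>{\<alpha>\<in>Poly_Mapping.keys f. \<alpha> \<in> Abar B}. Poly_Mapping.lookup f \<alpha> * mnm \<alpha> x)"
proof -
  have "(\<Sum>r\<in>Rset B. peval f (flip r x)) = (\<Sum>\<alpha>\<in>Poly_Mapping.keys f.
      Poly_Mapping.lookup f \<alpha> * mnm \<alpha> x * (\<Sum>r\<in>Rset B. (-1)^(\<Sum>i\<in>UNIV. r i * \<alpha> i)))"
    unfolding peval_flip by (subst sum.swap) (simp add: sum_distrib_left mult_ac)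
  also have "\<dots> = (\<Sum>\<alpha>\<in>Poly_Mapping.keys f. if \<alpha> \<in> Abar B then
      real (card (Rset B)) * (Poly_Mapping.lookup f \<alpha> * mnm \<alpha> x) else 0)"
  proof (rule sum.cong[OF refl])
    fix \<alpha>
    show "Poly_Mapping.lookup f \<alpha> * mnm \<alpha> x * (\<Sum>r\<in>Rset B. (-1)^(\<Sum>i\<in>UNIV. r i * \<alpha> i)) =
      (if \<alpha> \<in> Abar B then real (card (Rset B)) * (Poly_Mapping.lookup f \<alpha> * mnm \<alpha> x) else 0)"
    proof (cases "\<alpha> \<in> Abar B")
      case True
      then have "(\<Sum>r\<in>Rset B. (-1::real)^(\<Sum>i\<in>UNIV. r i * \<alpha> i)) = (\<Sum>r\<in>Rset B. 1)"
        by (intro sum.cong) (auto simp: Abar_def)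
      then show ?thesis using True by simp
    next
      case False
      then show ?thesis using char_sum[OF False] by simp
    qed
  qed
  also have "\<dots> = (\<Sum>\<alpha>\<in>{\<alpha>\<in>Poly_Mapping.keys f. \<alpha> \<in> Abar B}. real (card (Rset B)) * (Poly_Mapping.lookup f \<alpha> * mnm \<alpha> x))"
    by (simp add: sum.inter_filter)
  finally show ?thesis by (simp add: sum_distrib_left)
qed


lemma peval_cont: "continuous_on S (\<lambda>x. peval f x)"
  unfolding peval_def by (intro continuous_intros)

lemma approx:
  fixes K :: "(real^'n::finite) set" and F :: "real^'n \<Rightarrow> real"
  assumes "compact K" "continuous_on K F"
    and Kinv: "\<And>r x. r \<in> Rset B \<Longrightarrow> x \<in> K \<Longrightarrow> flip r x \<in> K"
    and Finv: "\<And>r x. r \<in> Rset B \<Longrightarrow> x \<in> K \<Longrightarrow> F (flip r x) = F x"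
    and "e > 0"
  shows "\<exists>h. supp h \<subseteq> Abar B \<and> (\<forall>x\<in>K. \<bar>peval h x - F x\<bar> < e)"
proof -
  obtain P where P: "polynomial_function P" "\<forall>x\<in>K. norm (F x - P x) < e"
    using Stone_Weierstrass_polynomial_function[OF assms(1,2) assms(5)] by blast
  have "rep P" using P(1) by (intro rep_poly) (simp add: real_polynomial_function_eq)
  then obtain f where f: "\<forall>x. peval f x = P x" unfolding rep_def by blast
  obtain h where h: "Poly_Mapping.keys h \<subseteq> {\<alpha>\<in>Poly_Mapping.keys f. \<alpha> \<in> Abar B}"
    "\<forall>x. peval h x = (\<Sum>\<alpha>\<in>{\<alpha>\<in>Poly_Mapping.keys f. \<alpha> \<in> Abar B}. Poly_Mapping.lookup f \<alpha> * mnm \<alpha> x)"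
    using rep_exists[of "{\<alpha>\<in>Poly_Mapping.keys f. \<alpha> \<in> Abar B}" "Poly_Mapping.lookup f"] by auto
  define G where "G = Rset B"
  have Gfin: "finite G" and Gne: "G \<noteq> {}" unfolding G_def using finite_Rset zero_Rset by auto
  then have cpos: "real (card G) > 0" by auto
  have "\<bar>peval h x - F x\<bar> < e" if x: "x \<in> K" for x
  proof -
    have "real (card G) * peval h x = (\<Sum>r\<in>G. P (flip r x))"
      unfolding G_def h(2)[rule_format] avg[symmetric] f[rule_format] ..
    moreover have "real (card G) * F x = (\<Sum>r\<in>G. F (flip r x))"
      using Finv x unfolding G_def by simp
    ultimately have "real (card G) * (peval h x - F x) = (\<Sum>r\<in>G. P (flip r x) - F (flip r x))"
      by (simp add: algebra_simps sum_subtractf)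
    then have "real (card G) * \<bar>peval h x - F x\<bar> = \<bar>\<Sum>r\<in>G. P (flip r x) - F (flip r x)\<bar>"
      by (metis abs_mult abs_of_nat)
    also have "\<dots> \<le> (\<Sum>r\<in>G. \<bar>P (flip r x) - F (flip r x)\<bar>)" by (rule sum_abs)
    also have "\<dots> < (\<Sum>r\<in>G. e)"
    proof (rule sum_strict_mono[OF Gfin Gne])
      fix r assume "r \<in> G"
      then have "flip r x \<in> K" using Kinv x unfolding G_def by auto
      then show "\<bar>P (flip r x) - F (flip r x)\<bar> < e" using P(2) by (simp add: abs_minus_commute)
    qed
    also have "\<dots> = real (card G) * e" by simp
    finally show ?thesis using cpos by simp
  qed
  moreover have "supp h \<subseteq> Abar B" using h(1) unfolding supp_def by auto
  ultimately show ?thesis by blast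
qed


theorem theorem4p3:
  fixes N m :: nat
    and p q :: "nat \<Rightarrow> ('n::finite) rpoly"
    and g :: "nat \<Rightarrow> 'n rpoly"
    and K :: "(real ^ 'n) set"
    and A :: "nat \<Rightarrow> ('n \<Rightarrow> nat) set"
  assumes "N \<ge> 1" and "m \<ge> 1"
    and K_def: "K = {x. \<forall>j\<in>{1..m}. peval (g j) x \<ge> 0}"
    and "compact K"
    and qpos: "\<forall>i\<in>{1..N}. \<forall>x\<in>K. peval (q i) x > 0"
    and A_def: "\<forall>i\<in>{2..N}. A i = supp (p i) \<union> supp (q i) \<union> (\<Union>j\<in>{1..m}. supp (g j))"
  shows "(SUP c \<in> {c :: real. \<exists>h :: nat \<Rightarrow> 'n rpoly.
              (\<forall>i\<in>{2..N}. supp (h i) \<subseteq> Abar (A i)) \<and>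
              (\<forall>x\<in>K. peval (p 1) x / peval (q 1) x + (\<Sum>i=2..N. peval (h i) x) \<ge> c) \<and>
              (\<forall>i\<in>{2..N}. \<forall>x\<in>K. peval (p i) x / peval (q i) x \<ge> peval (h i) x)}. ereal c)
         = (INF x \<in> K. ereal (\<Sum>i=1..N. peval (p i) x / peval (q i) x))"
  proof -
  define F where "F i x = peval (p i) x / peval (q i) x" for i x
  define S where "S = {c :: real. \<exists>h :: nat \<Rightarrow> 'n rpoly.
              (\<forall>i\<in>{2..N}. supp (h i) \<subseteq> Abar (A i)) \<and>
              (\<forall>x\<in>K. peval (p 1) x / peval (q 1) x + (\<Sum>i=2..N. peval (h i) x) \<ge> c) \<and>
              (\<forall>i\<in>{2..N}. \<forall>x\<in>K. peval (p i) x / peval (q i) x \<ge> peval (h i) x)}"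
  have split: "(\<Sum>i=1..N. f i) = f 1 + (\<Sum>i=2..N. f i)" for f :: "nat \<Rightarrow> real"
  proof -
    have "{1..N} = insert 1 {2..N}" using assms(1) by auto
    then show ?thesis by simp
  qed
  have le1: "(SUP c\<in>S. ereal c) \<le> (INF x\<in>K. ereal (\<Sum>i=1..N. F i x))"
  proof (rule SUP_least)
    fix c assume "c \<in> S"
    then obtain h where h2: "\<forall>x\<in>K. F 1 x + (\<Sum>i=2..N. peval (h i) x) \<ge> c"
      and h3: "\<forall>i\<in>{2..N}. \<forall>x\<in>K. F i x \<ge> peval (h i) x"
      unfolding S_def F_def by blast
    show "ereal c \<le> (INF x\<in>K. ereal (\<Sum>i=1..N. F i x))"
    proof (rule INF_greatest)
      fix x assume x: "x \<in> K"
      have "(\<Sum>i=2..N. peval (h i) x) \<le> (\<Sum>i=2..N. F i x)" using h3 x by (intro sum_mono) auto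
      then have "c \<le> (\<Sum>i=1..N. F i x)" using h2 x split[of "\<lambda>i. F i x"] by fastforce
      then show "ereal c \<le> ereal (\<Sum>i=1..N. F i x)" by simp
    qed
  qed
  have contF: "continuous_on K (F i)" if "i \<in> {1..N}" for i
  proof -
    have "\<forall>x\<in>K. peval (q i) x \<noteq> 0" using qpos that by force
    then show ?thesis unfolding F_def[abs_def] by (intro continuous_on_divide peval_cont) auto
  qed
  have le2: "(INF x\<in>K. ereal (\<Sum>i=1..N. F i x)) \<le> (SUP c\<in>S. ereal c)"
  proof (rule dense_le)
    fix y assume y: "y < (INF x\<in>K. ereal (\<Sum>i=1..N. F i x))"
    show "y \<le> (SUP c\<in>S. ereal c)"
    proof (cases y)
      case (real c)
      have cx: "c < (\<Sum>i=1..N. F i x)" if "x \<in> K" for x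
      proof -
        have "ereal c < ereal (\<Sum>i=1..N. F i x)"
          using y real INF_lower[OF that, of "\<lambda>x. ereal (\<Sum>i=1..N. F i x)"] by (meson less_le_trans)
        then show ?thesis by simp
      qed
      obtain \<delta> where dpos: "\<delta> > 0" and dle: "\<forall>x\<in>K. c + \<delta> \<le> (\<Sum>i=1..N. F i x)"
      proof (cases "K = {}")
        case True
        then show ?thesis using that[of 1] by auto
      next
        case False
        have "continuous_on K (\<lambda>x. \<Sum>i=1..N. F i x)"
          using contF by (intro continuous_on_sum) auto
        then obtain x0 where x0: "x0 \<in> K" "\<forall>y\<in>K. (\<Sum>i=1..N. F i x0) \<le> (\<Sum>i=1..N. F i y)"
          using continuous_attains_inf[OF \<open>compact K\<close> False] by blast
        show ?thesis using that[of "(\<Sum>i=1..N. F i x0) - c"] cx[OF x0(1)] x0(2) by auto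
      qed
      define e where "e = \<delta> / (2 * real N)"
      have Npos: "real N > 0" using assms(1) by simp
      have epos: "e > 0" unfolding e_def using dpos Npos by simp
      have "\<exists>h. supp h \<subseteq> Abar (A i) \<and> (\<forall>x\<in>K. F i x - \<delta> / real N \<le> peval h x \<and> peval h x \<le> F i x)"
        if i: "i \<in> {2..N}" for i
      proof -
        have Ai: "A i = supp (p i) \<union> supp (q i) \<union> (\<Union>j\<in>{1..m}. supp (g j))" using A_def i by auto
        have Kinv: "flip r x \<in> K" if "r \<in> Rset (A i)" "x \<in> K" for r x
        proof -
          have "peval (g j) (flip r x) = peval (g j) x" if "j \<in> {1..m}" for j
            using \<open>r \<in> Rset (A i)\<close> Ai that by (intro peval_flip_inv) auto
          then show ?thesis using \<open>x \<in> K\<close> unfolding K_def by auto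
        qed
        have Finv: "F i (flip r x) - e = F i x - e" if "r \<in> Rset (A i)" "x \<in> K" for r x
        proof -
          have "peval (p i) (flip r x) = peval (p i) x" "peval (q i) (flip r x) = peval (q i) x"
            using that Ai by (auto intro!: peval_flip_inv)
          then show ?thesis unfolding F_def by simp
        qed
        have "continuous_on K (\<lambda>x. F i x - e)"
          using contF[of i] i by (intro continuous_intros) auto
        then obtain h where h: "supp h \<subseteq> Abar (A i)" "\<forall>x\<in>K. \<bar>peval h x - (F i x - e)\<bar> < e"
          using approx[OF \<open>compact K\<close> _ Kinv Finv epos] by blast
        have "2 * e = \<delta> / real N" unfolding e_def using Npos by simp
        then show ?thesis using h by (intro exI[of _ h]) force
      qed
      then obtain H where H: "\<forall>i\<in>{2..N}. supp (H i) \<subseteq> Abar (A i) \<and>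
          (\<forall>x\<in>K. F i x - \<delta> / real N \<le> peval (H i) x \<and> peval (H i) x \<le> F i x)"
        by metis
      have "real (card {2..N}) * (\<delta> / real N) \<le> real N * (\<delta> / real N)"
        using dpos Npos by (intro mult_right_mono) auto
      then have cardle: "real (card {2..N}) * (\<delta> / real N) \<le> \<delta>" using Npos by simp
      have "c \<in> S"
      proof -
        have "c \<le> F 1 x + (\<Sum>i=2..N. peval (H i) x)" if x: "x \<in> K" for x
        proof -
          have "(\<Sum>i=2..N. F i x - \<delta> / real N) \<le> (\<Sum>i=2..N. peval (H i) x)"
            using H x by (intro sum_mono) auto
          moreover have "(\<Sum>i=2..N. F i x - \<delta> / real N) = (\<Sum>i=2..N. F i x) - real (card {2..N}) * (\<delta> / real N)"
            by (simp add: sum_subtractf)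
          ultimately show ?thesis using dle x split[of "\<lambda>i. F i x"] cardle by auto
        qed
        then show ?thesis unfolding S_def F_def using H unfolding F_def by (intro CollectI exI[of _ H]) auto
      qed
      then show ?thesis unfolding real by (rule SUP_upper)
    qed (use y in auto)
  qed
  have "(SUP c\<in>S. ereal c) = (INF x\<in>K. ereal (\<Sum>i=1..N. F i x))" using le1 le2 by (rule antisym)
  then show ?thesis unfolding S_def F_def .
qed

end
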